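(* Let $\beta\in(0,1)$, $d\in\{1,2,3\}$, and for $k\in\mathbb N\cup\{0\}$ define $a_k^d(\beta):=\mathbb E\big(D_1^{-\beta(k-\frac d4)}\big)=\int_0^\infty w^{-\beta(k-\frac d4)}g_\beta(w)\,dw$. Then for every integer $k\ge 1$, $$0<a_k^d(\beta)\le 3\,\frac{\Gamma(1+k)}{\Gamma(1+\beta k)}.$$
   Context: $D_1$ is a positive $\beta$-stable random variable with Laplace transform $\mathbb E e^{-sD_1}=e^{-s^\beta}$, and $g_\beta$ denotes its density. *)

theory Defs
  imports "HOL-Analysis.Analysis"
begin

text \<open>g is the density (on (0,\<infinity>)) of a positive beta-stable random variable D_1,
  characterised by its Laplace transform  E exp(-s D_1) = exp(-s^beta), s \<ge> 0.\<close>
definition stable_density :: "real \<Rightarrow> (real \<Rightarrow> real) \<Rightarrow> bool" where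
  "stable_density \<beta> g \<longleftrightarrow>
     g \<in> borel_measurable lborel \<and>
     (\<forall>w>0. 0 \<le> g w) \<and>
     (\<forall>s\<ge>0. set_integrable lborel {0<..} (\<lambda>w. exp (- s * w) * g w) \<and>
             (LINT w:{0<..}|lborel. exp (- s * w) * g w) = exp (- (s powr \<beta>)))"

definition a_coeff :: "real \<Rightarrow> (real \<Rightarrow> real) \<Rightarrow> nat \<Rightarrow> nat \<Rightarrow> real" where
  "a_coeff \<beta> g d k =
     (LINT w:{0<..}|lborel. w powr (- \<beta> * (real k - real d / 4)) * g w)"

end

theory Submission
  imports Defs
begin


lemma Gamma_two_real: "Gamma (2::real) = 1"
proof -
  have "Gamma (1 + of_nat 1 :: real) = fact 1" by (rule Gamma_fact)
  thus ?thesis by simp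
qed

lemma lnG_diff_mono:
  fixes a b e :: real
  assumes "0 \<le> a" "a \<le> b" "0 \<le> e"
  shows "ln_Gamma (1+a+e) - ln_Gamma (1+a) \<le> ln_Gamma (1+b+e) - ln_Gamma (1+b)"
proof (cases "a < b")
  case False thus ?thesis using assms by simp
next
  case True
  define h where "h x = ln_Gamma (1+x+e) - ln_Gamma (1+x)" for x :: real
  have "\<And>x. a \<le> x \<Longrightarrow> x \<le> b \<Longrightarrow> (h has_real_derivative (Digamma (1+x+e) - Digamma (1+x))) (at x)"
    using assms unfolding h_def
    by (auto intro!: derivative_eq_intros)
  from MVT2[OF True this] obtain z where z: "a < z" "z < b"
    "h b - h a = (b - a) * (Digamma (1+z+e) - Digamma (1+z))" by blast
  have "Digamma (1+z) \<le> Digamma (1+z+e)" using z assms by (intro Digamma_real_mono) auto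
  hence "h b - h a \<ge> 0" using z True by simp
  thus ?thesis unfolding h_def by simp
qed

lemma lnG_mono2:
  fixes y z :: real
  assumes "1 \<le> y" "y \<le> z" "2 \<le> z"
  shows "ln_Gamma y \<le> ln_Gamma z"
proof -
  have z0: "ln_Gamma z \<ge> 0"
  proof (cases "z = 2")
    case True thus ?thesis by (simp add: ln_Gamma_real_pos Gamma_two_real)
  next
    case False
    have "Gamma (2::real) < Gamma z" using assms False by (intro Gamma_real_strict_mono) auto
    hence "1 < Gamma z" by (simp add: Gamma_two_real)
    thus ?thesis using assms by (simp add: ln_Gamma_real_pos)
  qed
  show ?thesis
  proof (cases "y \<ge> 3/2")
    case True
    show ?thesis
    proof (cases "y = z")
      case False
      thus ?thesis using True assms ln_Gamma_real_strict_mono[of y z] by simp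
    qed simp
  next
    case False
    have c: "convex_on {0<..} (ln \<circ> Gamma :: real \<Rightarrow> real)" by (rule log_convex_Gamma_real)
    have "(ln \<circ> Gamma) ((1 - (y-1)) *\<^sub>R 1 + (y-1) *\<^sub>R 2) \<le> (1-(y-1)) * (ln \<circ> Gamma) 1 + (y-1) * (ln \<circ> Gamma) (2::real)"
      using False assms by (intro convex_onD[OF c]) auto
    hence "ln (Gamma y) \<le> 0" by (simp add: algebra_simps Gamma_two_real)
    thus ?thesis using z0 assms by (simp add: ln_Gamma_real_pos)
  qed
qed

lemma gamma_ratio_ineq:
  fixes \<beta> m \<delta> :: real
  assumes "0 < \<beta>" "\<beta> < 1" "0 < m" "0 \<le> \<delta>" "1 \<le> m + \<delta>"
  shows "Gamma (1+m) / Gamma (1+\<beta>*m) \<le> Gamma (1+(m+\<delta>)) / Gamma (1+\<beta>*(m+\<delta>))"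
proof -
  have 1: "ln_Gamma (1+\<beta>*m+\<beta>*\<delta>) - ln_Gamma (1+\<beta>*m) \<le> ln_Gamma (1+m+\<beta>*\<delta>) - ln_Gamma (1+m)"
    using assms by (intro lnG_diff_mono) (auto simp: mult_left_le_one_le)
  have 2: "ln_Gamma (1+m+\<beta>*\<delta>) \<le> ln_Gamma (1+m+\<delta>)"
    using assms by (intro lnG_mono2) (auto simp: mult_left_le_one_le)
  have "ln_Gamma (1+m) - ln_Gamma (1+\<beta>*m) \<le> ln_Gamma (1+(m+\<delta>)) - ln_Gamma (1+\<beta>*(m+\<delta>))"
    using 1 2 by (simp add: algebra_simps)
  hence "exp (ln_Gamma (1+m) - ln_Gamma (1+\<beta>*m)) \<le> exp (ln_Gamma (1+(m+\<delta>)) - ln_Gamma (1+\<beta>*(m+\<delta>)))"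
    by simp
  thus ?thesis using assms
    by (simp add: exp_diff Gamma_real_pos_exp[symmetric] add_pos_nonneg)
qed


lemma Gamma_has_integral_pos:
  fixes q :: real assumes "q > 0"
  shows "((\<lambda>t. t powr (q - 1) / exp t) has_integral Gamma q) {0<..}"
proof -
  have "((\<lambda>t. t powr (q - 1) / exp t) has_integral Gamma q) {0..}"
    by (rule Gamma_integral_real) fact
  hence "((\<lambda>t. if t \<in> {0<..} then t powr (q - 1) / exp t else 0) has_integral Gamma q) {0..}"
    by (rule has_integral_spike [of "{0}", rotated 2]) auto
  also have "?this = ?thesis"
    by (subst has_integral_restrict) auto
  finally show ?thesis .
qed

lemma laplace_power:
  fixes p w :: real assumes p: "p > 0" and w: "w > 0"
  shows "(\<integral>\<^sup>+ s. ennreal (indicator {0<..} s * (s powr (p - 1) * exp (- s * w))) \<partial>lborel)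
         = ennreal (Gamma p * w powr (- p))"
proof -
  let ?f = "\<lambda>t::real. t powr (p - 1) / exp t"
  have S: "{0::real<..} \<in> sets lebesgue" by (simp add: sets_completionI_sets)
  have der: "\<And>x. x \<in> {0<..} \<Longrightarrow> ((\<lambda>s. w * s) has_field_derivative w) (at x within {0<..})"
    by (auto intro!: derivative_eq_intros)
  have inj: "inj_on (\<lambda>s. w * s) {0<..}" using w by (auto simp: inj_on_def)
  have img: "(\<lambda>s. w * s) ` {0<..} = {0<..}"
  proof
    show "{0<..} \<subseteq> (\<lambda>s. w * s) ` {0<..}"
    proof
      fix x :: real assume "x \<in> {0<..}"
      thus "x \<in> (\<lambda>s. w * s) ` {0<..}" using w by (intro image_eqI[of _ _ "x / w"]) auto
    qed
  qed (use w in auto)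
  have hi: "(?f has_integral Gamma p) {0<..}" by (rule Gamma_has_integral_pos) fact
  have ai: "?f absolutely_integrable_on {0<..}"
    using hi by (intro nonnegative_absolutely_integrable_1) auto
  have "(\<lambda>s. \<bar>w\<bar> * ?f (w * s)) absolutely_integrable_on {0<..} \<and>
        integral {0<..} (\<lambda>s. \<bar>w\<bar> * ?f (w * s)) = Gamma p"
    using has_absolute_integral_change_of_variables_1'[OF S der inj, of ?f "Gamma p"] img ai hi
    by (auto simp: integral_unique)
  hence "((\<lambda>s. \<bar>w\<bar> * ?f (w * s)) has_integral Gamma p) {0<..}"
    by (metis absolutely_integrable_on_def integrable_integral)
  hence "((\<lambda>s. w powr (- p) * (\<bar>w\<bar> * ?f (w * s))) has_integral Gamma p * w powr (- p)) {0<..}"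
    by (subst mult.commute[of "Gamma p"]) (rule has_integral_mult_right)
  note prev = this
  have eq: "x powr (p - 1) * exp (- x * w) = w powr (- p) * (\<bar>w\<bar> * ((w * x) powr (p - 1) / exp (w * x)))"
    if "x \<in> {0<..} - {}" for x
  proof -
    from that have x: "x > 0" by auto
    have "w powr (- p) * (\<bar>w\<bar> * ((w * x) powr (p - 1) / exp (w * x)))
        = (w powr (- p) * w powr 1 * w powr (p - 1)) * (x powr (p - 1) * exp (- x * w))"
      using w x by (simp add: powr_mult exp_minus field_simps)
    also have "w powr (- p) * w powr 1 * w powr (p - 1) = 1"
    proof -
      have "w powr (- p) * w powr 1 * w powr (p - 1) = w powr (- p + 1 + (p - 1))"
        by (simp only: powr_add)
      thus ?thesis using w by simp
    qed
    finally show ?thesis by (simp only: mult_1_left)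
  qed
  have "((\<lambda>s. s powr (p - 1) * exp (- s * w)) has_integral Gamma p * w powr (- p)) {0<..}"
    by (rule has_integral_spike[OF negligible_empty eq prev])
  hence "integral\<^sup>N lborel (\<lambda>s. indicator {0<..} s * (s powr (p - 1) * exp (- s * w)))
          = Gamma p * w powr (- p)"
    by (intro nn_integral_has_integral_lebesgue) auto
  thus ?thesis by simp
qed

lemma stretched_gamma:
  fixes p \<beta> :: real assumes p: "p > 0" and b: "\<beta> > 0"
  shows "(\<integral>\<^sup>+ s. ennreal (indicator {0<..} s * (s powr (p - 1) * exp (- (s powr \<beta>)))) \<partial>lborel)
         = ennreal (Gamma (p / \<beta>) / \<beta>)"
proof -
  let ?g = "\<lambda>t::real. t powr (1 / \<beta>)"
  let ?g' = "\<lambda>t::real. (1 / \<beta>) * t powr (1 / \<beta> - 1)"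
  let ?f = "\<lambda>s::real. s powr (p - 1) * exp (- (s powr \<beta>))"
  have S: "{0::real<..} \<in> sets lebesgue" by (simp add: sets_completionI_sets)
  have der: "\<And>x. x \<in> {0<..} \<Longrightarrow> (?g has_field_derivative ?g' x) (at x within {0<..})"
    by (rule has_field_derivative_at_within, rule has_real_derivative_powr) auto
  have inv: "\<And>t. t > 0 \<Longrightarrow> ?g t powr \<beta> = t" using b by (simp add: powr_powr)
  have inj: "inj_on ?g {0<..}"
  proof (rule inj_onI)
    fix x y :: real assume xy: "x \<in> {0<..}" "y \<in> {0<..}" "?g x = ?g y"
    have "x = ?g x powr \<beta>" using inv[of x] xy(1) by simp
    also have "\<dots> = ?g y powr \<beta>" using xy(3) by (rule arg_cong)
    also have "\<dots> = y" using inv[of y] xy(2) by simp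
    finally show "x = y" .
  qed
  have img: "?g ` {0<..} = {0<..}"
  proof
    show "{0<..} \<subseteq> ?g ` {0<..}"
    proof
      fix x :: real assume "x \<in> {0<..}"
      thus "x \<in> ?g ` {0<..}" using b by (intro image_eqI[of _ _ "x powr \<beta>"]) (auto simp: powr_powr)
    qed
  qed auto
  have q: "p / \<beta> > 0" using p b by simp
  have hi0: "((\<lambda>t. t powr (p / \<beta> - 1) / exp t) has_integral Gamma (p / \<beta>)) {0<..}"
    by (rule Gamma_has_integral_pos) fact
  hence hi1: "((\<lambda>t. (1 / \<beta>) * (t powr (p / \<beta> - 1) / exp t)) has_integral (1 / \<beta>) * Gamma (p / \<beta>)) {0<..}"
    by (rule has_integral_mult_right)
  have eq: "\<bar>?g' t\<bar> * ?f (?g t) = (1 / \<beta>) * (t powr (p / \<beta> - 1) / exp t)"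
    if "t \<in> {0<..} - {}" for t
  proof -
    from that have t: "t > 0" by auto
    have "\<bar>?g' t\<bar> * ?f (?g t) = (1 / \<beta>) * (t powr (1 / \<beta> - 1) * t powr ((p - 1) / \<beta>)) * exp (- t)"
      using t b inv by (simp add: powr_powr abs_mult)
    also have "t powr (1 / \<beta> - 1) * t powr ((p - 1) / \<beta>) = t powr (p / \<beta> - 1)"
    proof -
      have "t powr (1 / \<beta> - 1) * t powr ((p - 1) / \<beta>) = t powr ((1 / \<beta> - 1) + (p - 1) / \<beta>)"
        by (simp only: powr_add)
      also have "(1 / \<beta> - 1) + (p - 1) / \<beta> = p / \<beta> - 1" using b by (simp add: field_simps)
      finally show ?thesis .
    qed
    finally show ?thesis by (simp add: exp_minus divide_inverse)
  qed
  have hi: "((\<lambda>t. \<bar>?g' t\<bar> * ?f (?g t)) has_integral (1 / \<beta>) * Gamma (p / \<beta>)) {0<..}"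
    by (rule has_integral_spike[OF negligible_empty eq hi1])
  have ai: "(\<lambda>t. \<bar>?g' t\<bar> * ?f (?g t)) absolutely_integrable_on {0<..}"
    using hi by (intro nonnegative_absolutely_integrable_1) auto
  have L: "(\<lambda>t. \<bar>?g' t\<bar> * ?f (?g t)) absolutely_integrable_on {0<..} \<and>
     integral {0<..} (\<lambda>t. \<bar>?g' t\<bar> * ?f (?g t)) = (1 / \<beta>) * Gamma (p / \<beta>)"
    using ai integral_unique[OF hi] by blast
  have "?f absolutely_integrable_on (?g ` {0<..}) \<and> integral (?g ` {0<..}) ?f = (1 / \<beta>) * Gamma (p / \<beta>)"
    using has_absolute_integral_change_of_variables_1'[OF S der inj, of ?f "(1 / \<beta>) * Gamma (p / \<beta>)"] L
    by blast
  hence "(?f has_integral (1 / \<beta>) * Gamma (p / \<beta>)) {0<..}"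
    unfolding img by (metis absolutely_integrable_on_def integrable_integral)
  hence "integral\<^sup>N lborel (\<lambda>s. indicator {0<..} s * ?f s) = (1 / \<beta>) * Gamma (p / \<beta>)"
    by (intro nn_integral_has_integral_lebesgue) auto
  thus ?thesis by simp
qed

theorem lemma2p4:
  fixes \<beta> :: real and g :: "real \<Rightarrow> real" and d k :: nat
  assumes "0 < \<beta>" "\<beta> < 1"
    and "stable_density \<beta> g"
    and "d \<in> {1, 2, 3}"
    and "1 \<le> k"
  shows "0 < a_coeff \<beta> g d k \<and>
         a_coeff \<beta> g d k \<le> 3 * Gamma (1 + real k) / Gamma (1 + \<beta> * real k)"
proof -
  have b: "\<beta> > 0" by fact
  from assms(3) have gm: "g \<in> borel_measurable lborel" and gnn: "\<And>w. w > 0 \<Longrightarrow> 0 \<le> g w"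
    and lap: "\<And>s. s \<ge> 0 \<Longrightarrow> set_integrable lborel {0<..} (\<lambda>w. exp (- s * w) * g w)"
    and lapv: "\<And>s. s \<ge> 0 \<Longrightarrow> (LINT w:{0<..}|lborel. exp (- s * w) * g w) = exp (- (s powr \<beta>))"
    unfolding stable_density_def by auto
  have gmb[measurable]: "g \<in> borel_measurable borel" using gm by simp
  define m where "m = real k - real d / 4"
  define p where "p = \<beta> * m"
  have dle: "real d \<le> 3" using assms(4) by auto
  have kge: "real k \<ge> 1" using assms(5) by simp
  have m: "m \<ge> 1/4" using dle kge by (simp add: m_def)
  have p: "p > 0" using m b by (simp add: p_def)
  have Gp: "Gamma p > 0" using p by simp
  have lapnn: "(\<integral>\<^sup>+ w. ennreal (indicator {0<..} w * (exp (- s * w) * g w)) \<partial>lborel) = ennreal (exp (- (s powr \<beta>)))"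
    if s: "s \<ge> 0" for s :: real
  proof -
    have "integrable lborel (\<lambda>w. indicator {0<..} w * (exp (- s * w) * g w))"
      using lap[OF s] unfolding set_integrable_def by simp
    hence "(\<integral>\<^sup>+ w. ennreal (indicator {0<..} w * (exp (- s * w) * g w)) \<partial>lborel)
        = ennreal (integral\<^sup>L lborel (\<lambda>w. indicator {0<..} w * (exp (- s * w) * g w)))"
      by (rule nn_integral_eq_integral) (auto intro!: AE_I2 simp: indicator_def gnn)
    also have "integral\<^sup>L lborel (\<lambda>w. indicator {0<..} w * (exp (- s * w) * g w)) = exp (- (s powr \<beta>))"
      using lapv[OF s] unfolding set_lebesgue_integral_def by simp
    finally show ?thesis .
  qed
  define H where "H = (\<lambda>(s::real) (w::real). ennreal (indicator {0<..} s * (s powr (p - 1) * exp (- s * w)) * (indicator {0<..} w * g w)))"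
  have Hm: "(\<lambda>(s, w). H s w) \<in> borel_measurable (lborel \<Otimes>\<^sub>M lborel)" unfolding H_def by measurable
  have inner_w: "(\<integral>\<^sup>+ s. H s w \<partial>lborel) = ennreal (indicator {0<..} w * (w powr (- p) * g w)) * ennreal (Gamma p)" for w :: real
  proof (cases "w > 0")
    case True
    have "(\<integral>\<^sup>+ s. H s w \<partial>lborel) = (\<integral>\<^sup>+ s. ennreal (indicator {0<..} s * (s powr (p - 1) * exp (- s * w))) * ennreal (g w) \<partial>lborel)"
      using True gnn[OF True] by (intro nn_integral_cong) (simp add: H_def ennreal_mult)
    also have "\<dots> = (\<integral>\<^sup>+ s. ennreal (indicator {0<..} s * (s powr (p - 1) * exp (- s * w))) \<partial>lborel) * ennreal (g w)"
      by (rule nn_integral_multc) measurable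
    also have "\<dots> = ennreal (Gamma p * w powr (- p)) * ennreal (g w)" using laplace_power[OF p True] by simp
    also have "\<dots> = ennreal (indicator {0<..} w * (w powr (- p) * g w)) * ennreal (Gamma p)"
      using True gnn[OF True] Gp by (simp add: ennreal_mult[symmetric] mult_ac)
    finally show ?thesis .
  next
    case False
    thus ?thesis by (simp add: H_def)
  qed
  have inner_s: "(\<integral>\<^sup>+ w. H s w \<partial>lborel) = ennreal (indicator {0<..} s * (s powr (p - 1) * exp (- (s powr \<beta>))))" for s :: real
  proof (cases "s > 0")
    case True
    have "(\<integral>\<^sup>+ w. H s w \<partial>lborel) = (\<integral>\<^sup>+ w. ennreal (s powr (p - 1)) * ennreal (indicator {0<..} w * (exp (- s * w) * g w)) \<partial>lborel)"
      using True by (intro nn_integral_cong) (auto simp: H_def ennreal_mult[symmetric] indicator_def gnn mult_ac)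
    also have "\<dots> = ennreal (s powr (p - 1)) * (\<integral>\<^sup>+ w. ennreal (indicator {0<..} w * (exp (- s * w) * g w)) \<partial>lborel)"
      by (rule nn_integral_cmult) measurable
    also have "\<dots> = ennreal (s powr (p - 1)) * ennreal (exp (- (s powr \<beta>)))" using lapnn[of s] True by simp
    also have "\<dots> = ennreal (indicator {0<..} s * (s powr (p - 1) * exp (- (s powr \<beta>))))"
      using True by (simp add: ennreal_mult[symmetric])
    finally show ?thesis .
  next
    case False
    thus ?thesis by (simp add: H_def)
  qed
  define A where "A = (\<integral>\<^sup>+ w. ennreal (indicator {0<..} w * (w powr (- p) * g w)) \<partial>lborel)"
  have "A * ennreal (Gamma p) = (\<integral>\<^sup>+ w. ennreal (indicator {0<..} w * (w powr (- p) * g w)) * ennreal (Gamma p) \<partial>lborel)"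
    unfolding A_def by (rule nn_integral_multc[symmetric]) measurable
  also have "\<dots> = (\<integral>\<^sup>+ w. (\<integral>\<^sup>+ s. H s w \<partial>lborel) \<partial>lborel)" by (simp add: inner_w)
  also have "\<dots> = (\<integral>\<^sup>+ s. (\<integral>\<^sup>+ w. H s w \<partial>lborel) \<partial>lborel)" by (rule lborel_pair.Fubini'[OF Hm])
  also have "\<dots> = (\<integral>\<^sup>+ s. ennreal (indicator {0<..} s * (s powr (p - 1) * exp (- (s powr \<beta>)))) \<partial>lborel)"
    by (simp add: inner_s)
  also have "\<dots> = ennreal (Gamma (p / \<beta>) / \<beta>)" by (rule stretched_gamma[OF p b])
  finally have AG: "A * ennreal (Gamma p) = ennreal (Gamma (p / \<beta>) / \<beta>)" .
  define V where "V = Gamma (p / \<beta>) / \<beta> / Gamma p"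
  have "A = A * (ennreal (Gamma p) * ennreal (1 / Gamma p))"
    using Gp by (simp add: ennreal_mult[symmetric])
  also have "\<dots> = ennreal (Gamma (p / \<beta>) / \<beta>) * ennreal (1 / Gamma p)"
    using AG by (simp add: mult.assoc[symmetric])
  also have "\<dots> = ennreal V"
    using Gp b p by (simp add: V_def ennreal_mult[symmetric] divide_nonneg_pos)
  finally have AV: "A = ennreal V" .
  have int: "integral\<^sup>L lborel (\<lambda>w. indicator {0<..} w * (w powr (- p) * g w)) = V"
  proof -
    have mf: "(\<lambda>w. indicator {0<..} w * (w powr (- p) * g w)) \<in> borel_measurable lborel" by measurable
    have ae: "AE w in lborel. 0 \<le> indicator {0<..} w * (w powr (- p) * g w)"
      by (auto intro!: AE_I2 simp: indicator_def gnn)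
    have V0: "0 \<le> V" using Gp b p by (simp add: V_def)
    from nn_integral_eq_integrable[OF mf ae V0] AV show ?thesis by (simp add: A_def)
  qed
  have aV: "a_coeff \<beta> g d k = V"
    unfolding a_coeff_def set_lebesgue_integral_def using int by (simp add: p_def m_def)
  have m0: "m > 0" using m by simp
  have pm: "p / \<beta> = m" using b by (simp add: p_def)
  have G1: "Gamma (1 + m) = m * Gamma m"
  proof -
    have "m \<notin> \<int>\<^sub>\<le>\<^sub>0"
    proof
      assume "m \<in> \<int>\<^sub>\<le>\<^sub>0"
      hence "m \<le> 0" by (rule nonpos_Ints_nonpos)
      with m0 show False by simp
    qed
    from Gamma_plus1[OF this] show ?thesis by (simp add: add.commute)
  qed
  have G2: "Gamma (1 + p) = p * Gamma p"
  proof -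
    have "p \<notin> \<int>\<^sub>\<le>\<^sub>0"
    proof
      assume "p \<in> \<int>\<^sub>\<le>\<^sub>0"
      hence "p \<le> 0" by (rule nonpos_Ints_nonpos)
      with p show False by simp
    qed
    from Gamma_plus1[OF this] show ?thesis by (simp add: add.commute)
  qed
  have V2: "V = Gamma (1 + m) / Gamma (1 + \<beta> * m)"
    unfolding V_def pm G1 using G2 m0 b by (simp add: p_def field_simps)
  have ineq: "Gamma (1 + m) / Gamma (1 + \<beta> * m) \<le> Gamma (1 + (m + real d / 4)) / Gamma (1 + \<beta> * (m + real d / 4))"
    using assms(1,2) m0 kge by (intro gamma_ratio_ineq) (auto simp: m_def)
  have mk: "m + real d / 4 = real k" by (simp add: m_def)
  have pos: "0 < Gamma (1 + real k) / Gamma (1 + \<beta> * real k)"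
    using b by (simp add: add_pos_nonneg)
  have "V > 0" using m0 b by (simp add: V2 add_pos_nonneg)
  moreover have "V \<le> 3 * Gamma (1 + real k) / Gamma (1 + \<beta> * real k)"
    using ineq pos unfolding mk V2[symmetric] by simp
  ultimately show ?thesis using aV by simp
qed

end
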